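(* Let $n$ be odd and let $A$ be an $n\times n$ semi-ASM. Then $A$ has a semi-ASM extension $B$ all of whose entries are nonzero.
   Context: A semi-ASM of order $n$ is an $n\times n$ matrix with entries in $\{0,1,-1\}$ all of whose row sums and column sums equal $1$. If $A$ and $B$ are semi-ASMs of order $n$ and $B$ agrees with $A$ in every position where $A$ is nonzero, then $B$ is a semi-ASM extension of $A$. *)

theory Defs
  imports Main
begin

text \<open>An n x n matrix is represented as a function nat => nat => int; only the
entries with indices i < n, j < n are relevant.\<close>

definition semi_asm :: "nat \<Rightarrow> (nat \<Rightarrow> nat \<Rightarrow> int) \<Rightarrow> bool" where
  "semi_asm n A \<longleftrightarrow>
     (\<forall>i<n. \<forall>j<n. A i j \<in> {0, 1, -1}) \<and>
     (\<forall>i<n. (\<Sum>j<n. A i j) = 1) \<and>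
     (\<forall>j<n. (\<Sum>i<n. A i j) = 1)"

definition semi_asm_extension :: "nat \<Rightarrow> (nat \<Rightarrow> nat \<Rightarrow> int) \<Rightarrow> (nat \<Rightarrow> nat \<Rightarrow> int) \<Rightarrow> bool" where
  "semi_asm_extension n A B \<longleftrightarrow>
     semi_asm n A \<and> semi_asm n B \<and> (\<forall>i<n. \<forall>j<n. A i j \<noteq> 0 \<longrightarrow> B i j = A i j)"

end

theory Submission imports Defs begin
definition e :: "nat \<Rightarrow> nat \<Rightarrow> nat \<Rightarrow> nat \<Rightarrow> int" where
  "e a b = (\<lambda>r c. if r = a \<and> c = b then 1 else 0)"
lemma e_row[simp]: "(\<Sum>c<n. e a b r c) = (if r = a \<and> b < n then 1 else 0)"
  unfolding e_def by (cases "r=a") auto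
lemma e_col[simp]: "(\<Sum>r<n. e a b r c) = (if c = b \<and> a < n then 1 else 0)"
  unfolding e_def by (cases "c=b") auto
lemma e_tot[simp]: "(\<Sum>r<n. \<Sum>c<n. e a b r c) = (if a < n \<and> b < n then 1 else 0)"
  by (cases "b<n") auto

definition good :: "nat \<Rightarrow> (nat \<Rightarrow> nat \<Rightarrow> int) \<Rightarrow> bool" where
 "good n Z \<longleftrightarrow> (\<forall>r c. Z r c \<in> {0,1}) \<and> (\<forall>r c. \<not>(r<n \<and> c<n) \<longrightarrow> Z r c = 0)
   \<and> (\<forall>r<n. even (\<Sum>c<n. Z r c)) \<and> (\<forall>c<n. even (\<Sum>r<n. Z r c))"
definition signs :: "nat \<Rightarrow> (nat \<Rightarrow> nat \<Rightarrow> int) \<Rightarrow> (nat \<Rightarrow> nat \<Rightarrow> int) \<Rightarrow> bool" where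
 "signs n Z S \<longleftrightarrow> (\<forall>r c. Z r c = 1 \<longrightarrow> S r c \<in> {1,-1}) \<and> (\<forall>r c. Z r c = 0 \<longrightarrow> S r c = 0)
   \<and> (\<forall>r<n. (\<Sum>c<n. S r c) = 0) \<and> (\<forall>c<n. (\<Sum>r<n. S r c) = 0)"

lemma good_tot_nonneg: "good n Z \<Longrightarrow> 0 \<le> (\<Sum>r<n. \<Sum>c<n. Z r c)"
  unfolding good_def by (intro sum_nonneg) (metis insertE singletonD order.refl zero_le_one)

lemma sum_single:
  fixes f :: "nat \<Rightarrow> int"
  assumes "j < n" "\<forall>c<n. c \<noteq> j \<longrightarrow> f c = 0"
  shows "(\<Sum>c<n. f c) = f j"
proof -
  have "(\<Sum>c<n. f c) = (\<Sum>c<n. if c = j then f j else 0)"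
    by (rule sum.cong) (use assms in auto)
  also have "\<dots> = f j" using assms by simp
  finally show ?thesis .
qed

lemma key: assumes "good n Z" shows "\<exists>S. signs n Z S"
  using assms
proof (induction "nat (\<Sum>r<n. \<Sum>c<n. Z r c)" arbitrary: Z rule: less_induct)
  case less
  have vals: "\<And>r c. Z r c = 0 \<or> Z r c = 1" and out: "\<And>r c. \<not>(r<n \<and> c<n) \<Longrightarrow> Z r c = 0"
    and rows: "\<And>r. r<n \<Longrightarrow> even (\<Sum>c<n. Z r c)" and cols: "\<And>c. c<n \<Longrightarrow> even (\<Sum>r<n. Z r c)"
    using less.prems unfolding good_def by auto
  show ?case
  proof (cases "\<exists>i j. Z i j = 1")
    case False
    then have "\<forall>r c. Z r c = 0" using vals by blast
    then show ?thesis unfolding signs_def by (intro exI[of _ "\<lambda>_ _. 0"]) auto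
  next
    case True
    then obtain i j where ij: "Z i j = 1" by auto
    have i: "i<n" "j<n" using out[of i j] ij by auto
    obtain k where k: "k<n" "k\<noteq>j" "Z i k = 1"
    proof -
      have "\<exists>k<n. k \<noteq> j \<and> Z i k = 1"
      proof (rule ccontr)
        assume "\<not> ?thesis"
        then have "\<forall>c<n. c \<noteq> j \<longrightarrow> Z i c = 0" using vals by blast
        then have "(\<Sum>c<n. Z i c) = Z i j" by (rule sum_single[OF i(2)])
        then show False using rows[OF i(1)] ij by simp
      qed
      then show ?thesis using that by blast
    qed
    obtain l where l: "l<n" "l\<noteq>i" "Z l j = 1"
    proof -
      have "\<exists>l<n. l \<noteq> i \<and> Z l j = 1"
      proof (rule ccontr)
        assume "\<not> ?thesis"
        then have "\<forall>c<n. c \<noteq> i \<longrightarrow> Z c j = 0" using vals by blast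
        then have "(\<Sum>c<n. Z c j) = Z i j" by (rule sum_single[OF i(1)])
        then show False using cols[OF i(2)] ij by simp
      qed
      then show ?thesis using that by blast
    qed
    define T where "T = (\<Sum>r<n. \<Sum>c<n. Z r c)"
    show ?thesis
    proof (cases "Z l k = 1")
      case True
      define Z' where "Z' = (\<lambda>r c. Z r c - e i j r c - e i k r c - e l j r c - e l k r c)"
      have rs: "\<And>r. (\<Sum>c<n. Z' r c) = (\<Sum>c<n. Z r c) - (if r = i then 2 else 0) - (if r = l then 2 else 0)"
        unfolding Z'_def using i k l by (simp add: sum_subtractf)
      have cs: "\<And>c. (\<Sum>r<n. Z' r c) = (\<Sum>r<n. Z r c) - (if c = j then 2 else 0) - (if c = k then 2 else 0)"
        unfolding Z'_def using i k l by (simp add: sum_subtractf)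
      have ts: "(\<Sum>r<n. \<Sum>c<n. Z' r c) = T - 4"
        unfolding Z'_def T_def using i k l by (simp add: sum_subtractf sum_distrib_left[symmetric])
      have g: "good n Z'"
        unfolding good_def
      proof (intro conjI allI impI)
        fix r c show "Z' r c \<in> {0,1}" using vals[of r c] ij k l True
          unfolding Z'_def e_def by auto
      next
        fix r c assume "\<not>(r<n \<and> c<n)" then show "Z' r c = 0"
          using out[of r c] i k l unfolding Z'_def e_def by auto
      next
        fix r assume "r<n" then show "even (\<Sum>c<n. Z' r c)" using rows[of r] rs[of r] by auto
      next
        fix c assume "c<n" then show "even (\<Sum>r<n. Z' r c)" using cols[of c] cs[of c] by auto
      qed
      have "0 \<le> T - 4" using good_tot_nonneg[OF g] ts by simp
      then have "nat (\<Sum>r<n. \<Sum>c<n. Z' r c) < nat (\<Sum>r<n. \<Sum>c<n. Z r c)"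
        using ts T_def by simp
      from less.hyps[OF this g] obtain S' where S': "signs n Z' S'" by blast
      define S where "S = (\<lambda>r c. S' r c + e i j r c - e i k r c - e l j r c + e l k r c)"
      have "signs n Z S"
        unfolding signs_def
      proof (intro conjI allI impI)
        fix r c assume z: "Z r c = 1"
        show "S r c \<in> {1,-1}"
        proof (cases "(r = i \<or> r = l) \<and> (c = j \<or> c = k)")
          case True
          then have "Z' r c = 0" using z unfolding Z'_def e_def using i k l by auto
          then have "S' r c = 0" using S' unfolding signs_def by blast
          then show ?thesis using True i k l unfolding S_def e_def by auto
        next
          case False
          then have "Z' r c = 1" using z unfolding Z'_def e_def by auto
          then have "S' r c \<in> {1,-1}" using S' unfolding signs_def by blast
          then show ?thesis using False unfolding S_def e_def by auto
        qed
      next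
        fix r c assume z: "Z r c = 0"
        then have nf: "\<not>((r = i \<or> r = l) \<and> (c = j \<or> c = k))" using ij k l True by auto
        then have "Z' r c = 0" using z unfolding Z'_def e_def by auto
        then have "S' r c = 0" using S' unfolding signs_def by blast
        then show "S r c = 0" using nf unfolding S_def e_def by auto
      next
        fix r assume "r<n" then show "(\<Sum>c<n. S r c) = 0"
          using S' i k l unfolding signs_def S_def by (simp add: sum.distrib sum_subtractf)
      next
        fix c assume "c<n" then show "(\<Sum>r<n. S r c) = 0"
          using S' i k l unfolding signs_def S_def by (simp add: sum.distrib sum_subtractf)
      qed
      then show ?thesis by blast
    next
      case False
      then have lk: "Z l k = 0" using vals by blast
      define Z' where "Z' = (\<lambda>r c. Z r c - e i j r c - e i k r c - e l j r c + e l k r c)"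
      have rs: "\<And>r. (\<Sum>c<n. Z' r c) = (\<Sum>c<n. Z r c) - (if r = i then 2 else 0)"
        unfolding Z'_def using i k l by (simp add: sum_subtractf sum.distrib)
      have cs: "\<And>c. (\<Sum>r<n. Z' r c) = (\<Sum>r<n. Z r c) - (if c = j then 2 else 0)"
        unfolding Z'_def using i k l by (simp add: sum_subtractf sum.distrib)
      have ts: "(\<Sum>r<n. \<Sum>c<n. Z' r c) = T - 2"
        unfolding Z'_def T_def using i k l by (simp add: sum_subtractf sum.distrib sum_distrib_left[symmetric])
      have g: "good n Z'"
        unfolding good_def
      proof (intro conjI allI impI)
        fix r c show "Z' r c \<in> {0,1}" using vals[of r c] ij k l lk
          unfolding Z'_def e_def by auto
      next
        fix r c assume "\<not>(r<n \<and> c<n)" then show "Z' r c = 0"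
          using out[of r c] i k l unfolding Z'_def e_def by auto
      next
        fix r assume "r<n" then show "even (\<Sum>c<n. Z' r c)" using rows[of r] rs[of r] by auto
      next
        fix c assume "c<n" then show "even (\<Sum>r<n. Z' r c)" using cols[of c] cs[of c] by auto
      qed
      have "0 \<le> T - 2" using good_tot_nonneg[OF g] ts by simp
      then have "nat (\<Sum>r<n. \<Sum>c<n. Z' r c) < nat (\<Sum>r<n. \<Sum>c<n. Z r c)"
        using ts T_def by simp
      from less.hyps[OF this g] obtain S' where S': "signs n Z' S'" by blast
      define t where "t = S' l k"
      have "Z' l k = 1" using lk k l unfolding Z'_def e_def by auto
      then have t: "t \<in> {1,-1}" using S' unfolding signs_def t_def by blast
      define S where "S = (\<lambda>r c. S' r c + t * (e l j r c - e i j r c + e i k r c - e l k r c))"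
      have "signs n Z S"
        unfolding signs_def
      proof (intro conjI allI impI)
        fix r c assume z: "Z r c = 1"
        show "S r c \<in> {1,-1}"
        proof (cases "(r,c) = (l,j) \<or> (r,c) = (i,j) \<or> (r,c) = (i,k)")
          case True
          then have "Z' r c = 0" using z unfolding Z'_def e_def using i k l by auto
          then have "S' r c = 0" using S' unfolding signs_def by blast
          then show ?thesis using True i k l t unfolding S_def e_def by auto
        next
          case False
          moreover have "(r,c) \<noteq> (l,k)" using z lk by auto
          ultimately have "Z' r c = 1" using z unfolding Z'_def e_def by auto
          then have "S' r c \<in> {1,-1}" using S' unfolding signs_def by blast
          then show ?thesis using False \<open>(r,c) \<noteq> (l,k)\<close> unfolding S_def e_def by auto
        qed
      next
        fix r c assume z: "Z r c = 0"
        show "S r c = 0"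
        proof (cases "(r,c) = (l,k)")
          case True then show ?thesis unfolding S_def e_def t_def using i k l by auto
        next
          case False
          have nf: "\<not>((r,c) = (l,j) \<or> (r,c) = (i,j) \<or> (r,c) = (i,k))" using z ij k l by auto
          then have "Z' r c = 0" using z False unfolding Z'_def e_def by auto
          then have "S' r c = 0" using S' unfolding signs_def by blast
          then show "S r c = 0" using nf False unfolding S_def e_def by auto
        qed
      next
        fix r assume "r<n" then show "(\<Sum>c<n. S r c) = 0"
          using S' i k l unfolding signs_def S_def
          by (simp add: sum.distrib sum_subtractf sum_distrib_left[symmetric])
      next
        fix c assume "c<n" then show "(\<Sum>r<n. S r c) = 0"
          using S' i k l unfolding signs_def S_def
          by (simp add: sum.distrib sum_subtractf sum_distrib_left[symmetric])
      qed
      then show ?thesis by blast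
    qed
  qed
qed

lemma parity:
  fixes a :: "nat \<Rightarrow> int"
  assumes "finite J" "\<forall>j\<in>J. a j \<in> {0,1,-1}"
  shows "even ((\<Sum>j\<in>J. a j) + int (card {j\<in>J. a j = 0}) + int (card J))"
  using assms
proof (induction J rule: finite_induct)
  case empty then show ?case by simp
next
  case (insert x F)
  have c: "{j\<in>insert x F. a j = 0} = (if a x = 0 then insert x {j\<in>F. a j = 0} else {j\<in>F. a j = 0})"
    by auto
  have "a x \<in> {0,1,-1}" using insert by auto
  then show ?case using insert c by (auto simp: algebra_simps)
qed

lemma count_sum: "(\<Sum>c<(n::nat). if P c then 1 else 0) = int (card {c\<in>{..<n}. P c})"
proof -
  have "(\<Sum>c<n. if P c then 1 else 0) = (\<Sum>c\<in>{c\<in>{..<n}. P c}. (1::int))"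
    using sum.inter_filter[of "{..<n}" "\<lambda>_. (1::int)" P] by simp
  also have "\<dots> = int (card {c\<in>{..<n}. P c})" by simp
  finally show ?thesis .
qed

theorem mainTheorem15:
  fixes n :: nat and A :: "nat \<Rightarrow> nat \<Rightarrow> int"
  assumes "odd n" and "semi_asm n A"
  shows "\<exists>B. semi_asm_extension n A B \<and> (\<forall>i<n. \<forall>j<n. B i j \<noteq> 0)"
proof -
  have ent: "\<And>i j. i<n \<Longrightarrow> j<n \<Longrightarrow> A i j \<in> {0,1,-1}"
    and rs: "\<And>i. i<n \<Longrightarrow> (\<Sum>j<n. A i j) = 1" and cs: "\<And>j. j<n \<Longrightarrow> (\<Sum>i<n. A i j) = 1"
    using assms(2) unfolding semi_asm_def by auto
  define Z where "Z = (\<lambda>r c. if r<n \<and> c<n \<and> A r c = 0 then 1 else (0::int))"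
  have "good n Z" unfolding good_def
  proof (intro conjI allI impI)
    fix r c show "Z r c \<in> {0,1}" unfolding Z_def by auto
  next
    fix r c assume "\<not>(r<n \<and> c<n)" then show "Z r c = 0" unfolding Z_def by auto
  next
    fix r assume r: "r<n"
    have "(\<Sum>c<n. Z r c) = (\<Sum>c<n. if A r c = 0 then 1 else 0)"
      unfolding Z_def using r by (intro sum.cong) auto
    also have "\<dots> = int (card {c\<in>{..<n}. A r c = 0})" by (rule count_sum)
    finally have e1: "(\<Sum>c<n. Z r c) = int (card {c\<in>{..<n}. A r c = 0})" .
    have "even ((\<Sum>c<n. A r c) + int (card {c\<in>{..<n}. A r c = 0}) + int (card {..<n}))"
      using ent r by (intro parity) auto
    then show "even (\<Sum>c<n. Z r c)" using e1 rs[OF r] assms(1) by simp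
  next
    fix c assume r: "c<n"
    have "(\<Sum>r<n. Z r c) = (\<Sum>r<n. if A r c = 0 then 1 else 0)"
      unfolding Z_def using r by (intro sum.cong) auto
    also have "\<dots> = int (card {r\<in>{..<n}. A r c = 0})" by (rule count_sum)
    finally have e1: "(\<Sum>r<n. Z r c) = int (card {r\<in>{..<n}. A r c = 0})" .
    have "even ((\<Sum>r<n. A r c) + int (card {r\<in>{..<n}. A r c = 0}) + int (card {..<n}))"
      using ent r by (intro parity) auto
    then show "even (\<Sum>r<n. Z r c)" using e1 cs[OF r] assms(1) by simp
  qed
  then obtain S where S: "signs n Z S" using key by blast
  have S1: "\<And>r c. r<n \<Longrightarrow> c<n \<Longrightarrow> A r c = 0 \<Longrightarrow> S r c \<in> {1,-1}"
    and S0: "\<And>r c. r<n \<Longrightarrow> c<n \<Longrightarrow> A r c \<noteq> 0 \<Longrightarrow> S r c = 0"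
    and Sr: "\<And>r. r<n \<Longrightarrow> (\<Sum>c<n. S r c) = 0" and Sc: "\<And>c. c<n \<Longrightarrow> (\<Sum>r<n. S r c) = 0"
    using S unfolding signs_def Z_def by auto
  define B where "B = (\<lambda>r c. A r c + S r c)"
  have Bv: "\<And>r c. r<n \<Longrightarrow> c<n \<Longrightarrow> B r c \<in> {1,-1}"
  proof -
    fix r c assume rc: "r<n" "c<n"
    show "B r c \<in> {1,-1}"
    proof (cases "A r c = 0")
      case True then show ?thesis using S1[OF rc] unfolding B_def by auto
    next
      case False then show ?thesis using S0[OF rc] ent[OF rc] unfolding B_def by auto
    qed
  qed
  have "semi_asm n B" unfolding semi_asm_def
    using Bv rs cs Sr Sc by (auto simp: B_def sum.distrib)
  moreover have "\<forall>i<n. \<forall>j<n. A i j \<noteq> 0 \<longrightarrow> B i j = A i j"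
    using S0 unfolding B_def by auto
  moreover have "\<forall>i<n. \<forall>j<n. B i j \<noteq> 0" using Bv by fastforce
  ultimately show ?thesis using assms(2) unfolding semi_asm_extension_def by blast
qed

end
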